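(* Let $R$, $G$, $*$, $\sigma$ and $\mathcal{S}$ be as in the context, and suppose $\mathcal{S}$ is anticommutative. Let $x,y\in G_*$ and $\alpha,\beta\in R$ with $\alpha x\in\mathcal{S}$ and $\beta y\in\mathcal{S}$. Then: - (i) $xy=yx$ if and only if $xy\in G_*$; - (ii) if $xy\neq yx$, then $\alpha\beta=0$; if $xy=yx$, then $2\alpha\beta=0$; - (iii) $(x,y^2)=(x^2,y)=1$.
   Context: Throughout, $R$ is a commutative ring with unity with $\operatorname{char}(R)\neq 2$, and $\mathcal{U}(R)$ is its unit group. $G$ is a group with an involution $*$, i.e. a map $x\mapsto x^*$ with $(xy)^*=y^*x^*$ and $(x^* )^*=x$. The map $\sigma:G\to\mathcal{U}(R)$ is a nontrivial group homomorphism with kernel $N=\ker\sigma$, and it is compatible with $*$: $xx^*\in N$ for all $x\in G$. The group ring $RG$ carries the involution $\left(\sum_{x\in G}\alpha_x x\right)^{\sigma*}=\sum_{x\in G}\sigma(x)\alpha_x x^*$. Write $G_*=\{x\in G: x^*=x\}$ and $N_*=G_*\cap N$. Let $\mathcal{S}$ be the $R$-submodule of $RG$ spanned by the union of the following three sets: - $2\mathcal{S}_1=\{2x: x\in N_*\}$; - $\mathcal{S}_2=\{\alpha x: x\in G_*\setminus N,\ \alpha\in R,\ \alpha(1-\sigma(x))=0\}$; - $\mathcal{S}_3=\{x+\sigma(x)x^*: x\in G\setminus G_*\}$. $\mathcal{S}$ is called anticommutative if $ab+ba=0$ for all $a,b\in\mathcal{S}$. The commutator is $(x,y)=x^{-1}y^{-1}xy$.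 *)

theory Defs
  imports "HOL-Algebra.Group"
begin

text \<open>Elements of the group ring RG are modelled as functions g => r
  (finitely supported on the carrier for all elements we use).\<close>

definition gr_single :: "'g \<Rightarrow> 'r::zero \<Rightarrow> ('g \<Rightarrow> 'r)" where
  "gr_single x a = (\<lambda>z. if z = x then a else 0)"

definition gr_mult :: "('g, 'b) monoid_scheme \<Rightarrow> ('g \<Rightarrow> 'r::comm_ring_1) \<Rightarrow> ('g \<Rightarrow> 'r) \<Rightarrow> ('g \<Rightarrow> 'r)" where
  "gr_mult G a b = (\<lambda>z. \<Sum>p\<in>{(u, v). u \<in> carrier G \<and> v \<in> carrier G \<and> a u \<noteq> 0 \<and> b v \<noteq> 0
        \<and> u \<otimes>\<^bsub>G\<^esub> v = z}. a (fst p) * b (snd p))"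

inductive_set S_span :: "('g, 'b) monoid_scheme \<Rightarrow> ('g \<Rightarrow> 'g) \<Rightarrow> ('g \<Rightarrow> 'r::comm_ring_1)
    \<Rightarrow> ('g \<Rightarrow> 'r) set"
  for G star \<sigma> where
  gen1: "\<lbrakk>x \<in> carrier G; star x = x; \<sigma> x = 1\<rbrakk> \<Longrightarrow> gr_single x 2 \<in> S_span G star \<sigma>"
| gen2: "\<lbrakk>x \<in> carrier G; star x = x; \<sigma> x \<noteq> 1; a * (1 - \<sigma> x) = 0\<rbrakk>
          \<Longrightarrow> gr_single x a \<in> S_span G star \<sigma>"
| gen3: "\<lbrakk>x \<in> carrier G; star x \<noteq> x\<rbrakk>
          \<Longrightarrow> (\<lambda>z. gr_single x 1 z + gr_single (star x) (\<sigma> x) z) \<in> S_span G star \<sigma>"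
| zero: "(\<lambda>_. 0) \<in> S_span G star \<sigma>"
| add: "\<lbrakk>a \<in> S_span G star \<sigma>; b \<in> S_span G star \<sigma>\<rbrakk> \<Longrightarrow> (\<lambda>z. a z + b z) \<in> S_span G star \<sigma>"
| smult: "a \<in> S_span G star \<sigma> \<Longrightarrow> (\<lambda>z. c * a z) \<in> S_span G star \<sigma>"

definition anticommutative :: "('g, 'b) monoid_scheme \<Rightarrow> ('g \<Rightarrow> 'r::comm_ring_1) set \<Rightarrow> bool" where
  "anticommutative G S \<longleftrightarrow> (\<forall>a\<in>S. \<forall>b\<in>S. (\<lambda>z. gr_mult G a b z + gr_mult G b a z) = (\<lambda>_. 0))"

definition gcomm :: "('g, 'b) monoid_scheme \<Rightarrow> 'g \<Rightarrow> 'g \<Rightarrow> 'g" where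
  "gcomm G x y = inv\<^bsub>G\<^esub> x \<otimes>\<^bsub>G\<^esub> inv\<^bsub>G\<^esub> y \<otimes>\<^bsub>G\<^esub> x \<otimes>\<^bsub>G\<^esub> y"

end

theory Submission
  imports Defs
begin

lemma gr_mult_single_left:
  fixes G (structure)
  assumes grp: "group G" and u: "u \<in> carrier G" and z: "z \<in> carrier G"
  shows "gr_mult G (gr_single u a) b z = a * b (inv\<^bsub>G\<^esub> u \<otimes>\<^bsub>G\<^esub> z)"
proof -
  interpret group G by (rule grp)
  define w where "w = inv u \<otimes> z"
  have w: "w \<in> carrier G" using u z by (simp add: w_def)
  have uw: "u \<otimes> w = z" using u z w by (simp add: w_def m_assoc[symmetric])
  have uniq: "\<And>v. v \<in> carrier G \<Longrightarrow> u \<otimes> v = z \<Longrightarrow> v = w"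
    using u z unfolding w_def by (simp add: inv_solve_left)
  define T where "T = {(u', v). u' \<in> carrier G \<and> v \<in> carrier G \<and> gr_single u a u' \<noteq> 0 \<and> b v \<noteq> 0
        \<and> u' \<otimes> v = z}"
  have Tmem: "\<And>p1 p2. (p1, p2) \<in> T \<longleftrightarrow> (p1 \<in> carrier G \<and> p2 \<in> carrier G \<and> gr_single u a p1 \<noteq> 0 \<and> b p2 \<noteq> 0
        \<and> p1 \<otimes> p2 = z)" unfolding T_def by simp
  have sub: "T \<subseteq> {(u, w)}"
  proof
    fix x assume x: "x \<in> T"
    obtain p1 p2 where p: "x = (p1, p2)" by (cases x)
    have h: "p1 \<in> carrier G" "p2 \<in> carrier G" "gr_single u a p1 \<noteq> 0" "p1 \<otimes> p2 = z"
      using x Tmem unfolding p by blast+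
    have "p1 = u" using h(3) by (auto simp: gr_single_def split: if_splits)
    then have "p2 = w" using uniq h by blast
    then show "x \<in> {(u, w)}" using p \<open>p1 = u\<close> by simp
  qed
  have mem: "(u, w) \<in> T \<longleftrightarrow> a \<noteq> 0 \<and> b w \<noteq> 0"
    using Tmem u w uw by (simp add: gr_single_def)
  show ?thesis
  proof (cases "a \<noteq> 0 \<and> b w \<noteq> 0")
    case True
    then have "T = {(u, w)}" using sub mem by blast
    then show ?thesis unfolding gr_mult_def T_def[symmetric] by (simp add: w_def gr_single_def)
  next
    case False
    then have "T = {}" using sub mem by blast
    then show ?thesis using False unfolding gr_mult_def T_def[symmetric] by (auto simp: w_def)
  qed
qed

lemma gr_mult_single_right:
  fixes G (structure)
  assumes grp: "group G" and v: "v \<in> carrier G" and z: "z \<in> carrier G"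
  shows "gr_mult G a (gr_single v b) z = a (z \<otimes>\<^bsub>G\<^esub> inv\<^bsub>G\<^esub> v) * b"
proof -
  interpret group G by (rule grp)
  define w where "w = z \<otimes> inv v"
  have w: "w \<in> carrier G" using v z by (simp add: w_def)
  have uw: "w \<otimes> v = z" using v z w by (simp add: w_def m_assoc)
  have uniq: "\<And>u'. u' \<in> carrier G \<Longrightarrow> u' \<otimes> v = z \<Longrightarrow> u' = w"
    using v z unfolding w_def by (simp add: inv_solve_right)
  define T where "T = {(u', v'). u' \<in> carrier G \<and> v' \<in> carrier G \<and> a u' \<noteq> 0 \<and> gr_single v b v' \<noteq> 0
        \<and> u' \<otimes> v' = z}"
  have Tmem: "\<And>p1 p2. (p1, p2) \<in> T \<longleftrightarrow> (p1 \<in> carrier G \<and> p2 \<in> carrier G \<and> a p1 \<noteq> 0 \<and> gr_single v b p2 \<noteq> 0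
        \<and> p1 \<otimes> p2 = z)" unfolding T_def by simp
  have sub: "T \<subseteq> {(w, v)}"
  proof
    fix x assume x: "x \<in> T"
    obtain p1 p2 where p: "x = (p1, p2)" by (cases x)
    have h: "p1 \<in> carrier G" "p2 \<in> carrier G" "gr_single v b p2 \<noteq> 0" "p1 \<otimes> p2 = z"
      using x Tmem unfolding p by blast+
    have "p2 = v" using h(3) by (auto simp: gr_single_def split: if_splits)
    then have "p1 = w" using uniq h by blast
    then show "x \<in> {(w, v)}" using p \<open>p2 = v\<close> by simp
  qed
  have mem: "(w, v) \<in> T \<longleftrightarrow> a w \<noteq> 0 \<and> b \<noteq> 0"
    using Tmem v w uw by (simp add: gr_single_def)
  show ?thesis
  proof (cases "a w \<noteq> 0 \<and> b \<noteq> 0")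
    case True
    then have "T = {(w, v)}" using sub mem by blast
    then show ?thesis unfolding gr_mult_def T_def[symmetric] by (simp add: w_def gr_single_def)
  next
    case False
    then have "T = {}" using sub mem by blast
    then show ?thesis using False unfolding gr_mult_def T_def[symmetric] by (auto simp: w_def)
  qed
qed


lemma (in group) gcomm_one:
  assumes "a \<in> carrier G" "b \<in> carrier G" "a \<otimes> b = b \<otimes> a"
  shows "gcomm G a b = \<one>"
proof -
  have "gcomm G a b = inv a \<otimes> inv b \<otimes> (a \<otimes> b)" unfolding gcomm_def using assms by (simp add: m_assoc)
  also have "\<dots> = inv a \<otimes> inv b \<otimes> (b \<otimes> a)" using assms by simp
  also have "\<dots> = inv a \<otimes> (inv b \<otimes> (b \<otimes> a))" using assms by (simp add: m_assoc)
  also have "inv b \<otimes> (b \<otimes> a) = (inv b \<otimes> b) \<otimes> a" using assms by (simp add: m_assoc[symmetric])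
  also have "(inv b \<otimes> b) \<otimes> a = a" using assms by simp
  also have "inv a \<otimes> a = \<one>" using assms by simp
  finally show ?thesis .
qed

lemma (in group) eqA:
  assumes x: "x \<in> carrier G" and y: "y \<in> carrier G"
    and h: "(y \<otimes> y) \<otimes> x \<otimes> y \<otimes> inv (y \<otimes> y) = x \<otimes> y"
  shows "x \<otimes> (y \<otimes> y) = (y \<otimes> y) \<otimes> x"
proof -
  have "(y \<otimes> y) \<otimes> x \<otimes> y = x \<otimes> y \<otimes> (y \<otimes> y)" using h x y by (simp add: inv_solve_right')
  then have "((y \<otimes> y) \<otimes> x) \<otimes> y = (x \<otimes> (y \<otimes> y)) \<otimes> y" using x y by (simp add: m_assoc)
  then show ?thesis using x y by simp
qed

lemma (in group) eqB:
  assumes x: "x \<in> carrier G" and y: "y \<in> carrier G"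
    and h: "(y \<otimes> y) \<otimes> x \<otimes> y \<otimes> inv (y \<otimes> y) = y \<otimes> x"
  shows "x \<otimes> y = y \<otimes> x"
proof -
  have "(y \<otimes> y) \<otimes> x \<otimes> y = y \<otimes> x \<otimes> (y \<otimes> y)" using h x y by (simp add: inv_solve_right')
  then have "y \<otimes> ((y \<otimes> x) \<otimes> y) = y \<otimes> ((x \<otimes> y) \<otimes> y)" using x y by (simp add: m_assoc)
  then have "(y \<otimes> x) \<otimes> y = (x \<otimes> y) \<otimes> y" using x y by simp
  then show ?thesis using x y by simp
qed

lemma (in group) eqC:
  assumes x: "x \<in> carrier G" and y: "y \<in> carrier G"
    and h: "inv (x \<otimes> x) \<otimes> (x \<otimes> y \<otimes> (x \<otimes> x)) = x \<otimes> y"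
  shows "(x \<otimes> x) \<otimes> y = y \<otimes> (x \<otimes> x)"
proof -
  have "x \<otimes> y \<otimes> (x \<otimes> x) = (x \<otimes> x) \<otimes> (x \<otimes> y)" using h x y by (simp add: inv_solve_left')
  then have "x \<otimes> (y \<otimes> (x \<otimes> x)) = x \<otimes> ((x \<otimes> x) \<otimes> y)" using x y by (simp add: m_assoc)
  then show ?thesis using x y by simp
qed

lemma (in group) eqD:
  assumes x: "x \<in> carrier G" and y: "y \<in> carrier G"
    and h: "inv (x \<otimes> x) \<otimes> (x \<otimes> y \<otimes> (x \<otimes> x)) = y \<otimes> x"
  shows "x \<otimes> y = y \<otimes> x"
proof -
  have "x \<otimes> y \<otimes> (x \<otimes> x) = (x \<otimes> x) \<otimes> (y \<otimes> x)" using h x y by (simp add: inv_solve_left')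
  then have "x \<otimes> ((y \<otimes> x) \<otimes> x) = x \<otimes> ((x \<otimes> y) \<otimes> x)" using x y by (simp add: m_assoc)
  then have "(y \<otimes> x) \<otimes> x = (x \<otimes> y) \<otimes> x" using x y by simp
  then show ?thesis using x y by simp
qed


lemma lemma3p10_aux:
  fixes G (structure) and star :: "'g \<Rightarrow> 'g"
    and \<sigma> :: "'g \<Rightarrow> 'r::comm_ring_1" and x y :: 'g and \<alpha> \<beta> :: 'r
  assumes grp: "group G"
    and char: "(2::'r) \<noteq> 0"
    and star_mult: "\<And>g h. g \<in> carrier G \<Longrightarrow> h \<in> carrier G \<Longrightarrow>
        star (g \<otimes> h) = star h \<otimes> star g"
    and sigma_compat: "\<And>g. g \<in> carrier G \<Longrightarrow> \<sigma> (g \<otimes> star g) = 1"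
    and anti: "anticommutative G (S_span G star \<sigma>)"
    and x: "x \<in> carrier G" "star x = x"
    and y: "y \<in> carrier G" "star y = y"
    and ax: "gr_single x \<alpha> \<in> S_span G star \<sigma>"
    and by': "gr_single y \<beta> \<in> S_span G star \<sigma>"
  shows "(x \<otimes> y = y \<otimes> x \<longleftrightarrow> star (x \<otimes> y) = x \<otimes> y)
    \<and> (x \<otimes> y \<noteq> y \<otimes> x \<longrightarrow> \<alpha> * \<beta> = 0)
    \<and> (x \<otimes> y = y \<otimes> x \<longrightarrow> 2 * \<alpha> * \<beta> = 0)
    \<and> gcomm G x (y \<otimes> y) = \<one>
    \<and> gcomm G (x \<otimes> x) y = \<one>"
proof -
  interpret group G by (rule grp)
  have antiz: "\<And>a b z. a \<in> S_span G star \<sigma> \<Longrightarrow> b \<in> S_span G star \<sigma> \<Longrightarrow>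
      gr_mult G a b z + gr_mult G b a z = 0"
    using anti unfolding anticommutative_def by metis
  have sxy: "star (x \<otimes> y) = y \<otimes> x" using star_mult x y by simp
  have xyc: "x \<otimes> y \<in> carrier G" "y \<otimes> x \<in> carrier G" using x y by auto
  have P1: "x \<otimes> y = y \<otimes> x \<longleftrightarrow> star (x \<otimes> y) = x \<otimes> y" using sxy by auto
  have e1: "gr_mult G (gr_single x \<alpha>) (gr_single y \<beta>) (x \<otimes> y) = \<alpha> * \<beta>"
  proof -
    have "inv x \<otimes> (x \<otimes> y) = y" using x y by (simp add: m_assoc[symmetric])
    moreover have "gr_mult G (gr_single x \<alpha>) (gr_single y \<beta>) (x \<otimes> y) = \<alpha> * gr_single y \<beta> (inv x \<otimes> (x \<otimes> y))"
      by (rule gr_mult_single_left[OF grp x(1) xyc(1)])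
    ultimately show ?thesis by (simp add: gr_single_def)
  qed
  have e2: "gr_mult G (gr_single y \<beta>) (gr_single x \<alpha>) (x \<otimes> y) = (if x \<otimes> y = y \<otimes> x then \<beta> * \<alpha> else 0)"
  proof -
    have "inv y \<otimes> (x \<otimes> y) = x \<longleftrightarrow> x \<otimes> y = y \<otimes> x" using x y xyc by (simp add: inv_solve_left')
    moreover have "gr_mult G (gr_single y \<beta>) (gr_single x \<alpha>) (x \<otimes> y) = \<beta> * gr_single x \<alpha> (inv y \<otimes> (x \<otimes> y))"
      by (rule gr_mult_single_left[OF grp y(1) xyc(1)])
    ultimately show ?thesis by (auto simp: gr_single_def)
  qed
  have sum2: "\<alpha> * \<beta> + (if x \<otimes> y = y \<otimes> x then \<beta> * \<alpha> else 0) = 0"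
    using antiz[OF ax by', of "x \<otimes> y"] e1 e2 by simp
  have P2: "x \<otimes> y \<noteq> y \<otimes> x \<longrightarrow> \<alpha> * \<beta> = 0" using sum2 by auto
  have P3: "x \<otimes> y = y \<otimes> x \<longrightarrow> 2 * \<alpha> * \<beta> = 0" 
  proof
    assume "x \<otimes> y = y \<otimes> x"
    then have "\<alpha> * \<beta> + \<beta> * \<alpha> = 0" using sum2 by simp
    moreover have "2 * \<alpha> * \<beta> = \<alpha> * \<beta> + \<beta> * \<alpha>" by (simp add: mult_2 mult.commute)
    ultimately show "2 * \<alpha> * \<beta> = 0" by simp
  qed
  define s where "s = (\<lambda>z. gr_single (x \<otimes> y) 1 z + gr_single (star (x \<otimes> y)) (\<sigma> (x \<otimes> y)) z)"
  have sval: "\<And>w. w \<noteq> x \<otimes> y \<Longrightarrow> w \<noteq> y \<otimes> x \<Longrightarrow> s w = 0"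
    unfolding s_def sxy by (simp add: gr_single_def)
  have sxy1: "x \<otimes> y \<noteq> y \<otimes> x \<Longrightarrow> s (x \<otimes> y) = 1"
    unfolding s_def sxy by (simp add: gr_single_def)
  have sS: "x \<otimes> y \<noteq> y \<otimes> x \<Longrightarrow> s \<in> S_span G star \<sigma>"
    unfolding s_def using sxy xyc by (intro S_span.gen3) auto
  have P4: "x \<otimes> (y \<otimes> y) = (y \<otimes> y) \<otimes> x"
  proof (cases "x \<otimes> y = y \<otimes> x")
    case True
    then show ?thesis using x y by (metis m_assoc)
  next
    case False
    define q where "q = y \<otimes> y"
    have qc: "q \<in> carrier G" using y by (simp add: q_def)
    have tS: "gr_single q 2 \<in> S_span G star \<sigma>"
    proof (rule S_span.gen1)
      show "q \<in> carrier G" by (rule qc)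
      show "star q = q" unfolding q_def using star_mult y by simp
      show "\<sigma> q = 1" unfolding q_def using sigma_compat[OF y(1)] y by simp
    qed
    show ?thesis
    proof (rule ccontr)
      assume nc: "x \<otimes> (y \<otimes> y) \<noteq> (y \<otimes> y) \<otimes> x"
      define z where "z = q \<otimes> x \<otimes> y"
      have zc: "z \<in> carrier G" using qc x y by (simp add: z_def)
      have l: "gr_mult G (gr_single q 2) s z = 2"
      proof -
        have "inv q \<otimes> z = x \<otimes> y" using qc x y by (simp add: z_def m_assoc[symmetric])
        moreover have "gr_mult G (gr_single q 2) s z = 2 * s (inv q \<otimes> z)"
          by (rule gr_mult_single_left[OF grp qc zc])
        ultimately show ?thesis using sxy1[OF False] by simp
      qed
      have r: "gr_mult G s (gr_single q 2) z = 0"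
      proof -
        have "z \<otimes> inv q \<noteq> x \<otimes> y" using eqA[OF x(1) y(1)] nc unfolding z_def q_def by blast
        moreover have "z \<otimes> inv q \<noteq> y \<otimes> x" using eqB[OF x(1) y(1)] False unfolding z_def q_def by blast
        moreover have "gr_mult G s (gr_single q 2) z = s (z \<otimes> inv q) * 2"
          by (rule gr_mult_single_right[OF grp qc zc])
        ultimately show ?thesis using sval by simp
      qed
      show False using antiz[OF tS sS[OF False], of z] l r char by simp
    qed
  qed
  have P5: "(x \<otimes> x) \<otimes> y = y \<otimes> (x \<otimes> x)"
  proof (cases "x \<otimes> y = y \<otimes> x")
    case True
    then show ?thesis using x y by (metis m_assoc)
  next
    case False
    define p where "p = x \<otimes> x"
    have pc: "p \<in> carrier G" using x by (simp add: p_def)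
    have tS: "gr_single p 2 \<in> S_span G star \<sigma>"
    proof (rule S_span.gen1)
      show "p \<in> carrier G" by (rule pc)
      show "star p = p" unfolding p_def using star_mult x by simp
      show "\<sigma> p = 1" unfolding p_def using sigma_compat[OF x(1)] x by simp
    qed
    show ?thesis
    proof (rule ccontr)
      assume nc: "(x \<otimes> x) \<otimes> y \<noteq> y \<otimes> (x \<otimes> x)"
      define z where "z = x \<otimes> y \<otimes> p"
      have zc: "z \<in> carrier G" using pc x y by (simp add: z_def)
      have r: "gr_mult G s (gr_single p 2) z = 2"
      proof -
        have "z \<otimes> inv p = x \<otimes> y" using pc x y by (simp add: z_def m_assoc)
        moreover have "gr_mult G s (gr_single p 2) z = s (z \<otimes> inv p) * 2"
          by (rule gr_mult_single_right[OF grp pc zc])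
        ultimately show ?thesis using sxy1[OF False] by simp
      qed
      have l: "gr_mult G (gr_single p 2) s z = 0"
      proof -
        have "inv p \<otimes> z \<noteq> x \<otimes> y" using eqC[OF x(1) y(1)] nc unfolding z_def p_def by blast
        moreover have "inv p \<otimes> z \<noteq> y \<otimes> x" using eqD[OF x(1) y(1)] False unfolding z_def p_def by blast
        moreover have "gr_mult G (gr_single p 2) s z = 2 * s (inv p \<otimes> z)"
          by (rule gr_mult_single_left[OF grp pc zc])
        ultimately show ?thesis using sval by simp
      qed
      show False using antiz[OF tS sS[OF False], of z] l r char by simp
    qed
  qed
  have P6: "gcomm G x (y \<otimes> y) = \<one>" using gcomm_one[OF x(1) _ P4] y by simp
  have P7: "gcomm G (x \<otimes> x) y = \<one>" using gcomm_one[OF _ y(1) P5] x by simp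
  show ?thesis using P1 P2 P3 P6 P7 by blast
qed

theorem lemma3p10:
  fixes G :: "('g, 'b) monoid_scheme" and star :: "'g \<Rightarrow> 'g"
    and \<sigma> :: "'g \<Rightarrow> 'r::comm_ring_1" and x y :: 'g and \<alpha> \<beta> :: 'r
  assumes grp: "group G"
    and char: "(2::'r) \<noteq> 0"
    and star_closed: "\<And>g. g \<in> carrier G \<Longrightarrow> star g \<in> carrier G"
    and star_mult: "\<And>g h. g \<in> carrier G \<Longrightarrow> h \<in> carrier G \<Longrightarrow>
        star (g \<otimes>\<^bsub>G\<^esub> h) = star h \<otimes>\<^bsub>G\<^esub> star g"
    and star_star: "\<And>g. g \<in> carrier G \<Longrightarrow> star (star g) = g"
    and sigma_unit: "\<And>g. g \<in> carrier G \<Longrightarrow> \<sigma> g dvd 1"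
    and sigma_hom: "\<And>g h. g \<in> carrier G \<Longrightarrow> h \<in> carrier G \<Longrightarrow>
        \<sigma> (g \<otimes>\<^bsub>G\<^esub> h) = \<sigma> g * \<sigma> h"
    and sigma_nontriv: "\<exists>g\<in>carrier G. \<sigma> g \<noteq> 1"
    and sigma_compat: "\<And>g. g \<in> carrier G \<Longrightarrow> \<sigma> (g \<otimes>\<^bsub>G\<^esub> star g) = 1"
    and anti: "anticommutative G (S_span G star \<sigma>)"
    and x: "x \<in> carrier G" "star x = x"
    and y: "y \<in> carrier G" "star y = y"
    and ax: "gr_single x \<alpha> \<in> S_span G star \<sigma>"
    and by': "gr_single y \<beta> \<in> S_span G star \<sigma>"
  shows "(x \<otimes>\<^bsub>G\<^esub> y = y \<otimes>\<^bsub>G\<^esub> x \<longleftrightarrow> star (x \<otimes>\<^bsub>G\<^esub> y) = x \<otimes>\<^bsub>G\<^esub> y)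
    \<and> (x \<otimes>\<^bsub>G\<^esub> y \<noteq> y \<otimes>\<^bsub>G\<^esub> x \<longrightarrow> \<alpha> * \<beta> = 0)
    \<and> (x \<otimes>\<^bsub>G\<^esub> y = y \<otimes>\<^bsub>G\<^esub> x \<longrightarrow> 2 * \<alpha> * \<beta> = 0)
    \<and> gcomm G x (y \<otimes>\<^bsub>G\<^esub> y) = \<one>\<^bsub>G\<^esub>
    \<and> gcomm G (x \<otimes>\<^bsub>G\<^esub> x) y = \<one>\<^bsub>G\<^esub>"
  by (rule lemma3p10_aux[OF grp char star_mult sigma_compat anti x y ax by'])

end
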